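(* With $w=\sqrt{(u+1)^2-4}$, $$\sum_{n\ge0}\Bigl(\sum_{\sigma\in\mathfrak S_n}u^{{\rm lrda}(\sigma)}\beta^{{\rm RLmin}(\sigma)}\Bigr)\frac{t^n}{n!}=e^{\frac{\beta(u-1)}{2}t}\left(\frac{w}{w\cosh\bigl(\frac{wt}{2}\bigr)-(1+u)\sinh\bigl(\frac{wt}{2}\bigr)}\right)^{\beta}.$$
   Context: For $\sigma=\sigma_1\cdots\sigma_n\in\mathfrak S_n$ ($\mathfrak S_0$ = empty permutation): ${\rm lrda}(\sigma)$ is the number of $i$ with $1\le i\le n$ and $\sigma_{i-1}<\sigma_i<\sigma_{i+1}$ (conventions $\sigma_0=0$, $\sigma_{n+1}=+\infty$); ${\rm RLmin}(\sigma)$ is the number of $i$ with $\sigma_j>\sigma_i$ for all $j>i$. Identity of formal power series in $t$; the bracketed base has constant term $1$ and only even powers of $w$ occur; $G^c:=\exp(c\log G)$. *)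

theory Defs
  imports Complex_Main "HOL-Computational_Algebra.Formal_Power_Series" "HOL-Combinatorics.Permutations"
begin

(* lrda: number of i in 1..n with sigma(i-1) < sigma(i) < sigma(i+1),
   with conventions sigma(0) = 0 and sigma(n+1) = +infinity *)
definition lrda :: "nat \<Rightarrow> (nat \<Rightarrow> nat) \<Rightarrow> nat" where
  "lrda n \<sigma> = card {i \<in> {1..n}.
      (if i = 1 then 0 else \<sigma> (i - 1)) < \<sigma> i \<and> (i = n \<or> \<sigma> i < \<sigma> (i + 1))}"

definition RLmin :: "nat \<Rightarrow> (nat \<Rightarrow> nat) \<Rightarrow> nat" where
  "RLmin n \<sigma> = card {i \<in> {1..n}. \<forall>j \<in> {i+1..n}. \<sigma> j > \<sigma> i}"

definition lhs_egf :: "complex \<Rightarrow> complex \<Rightarrow> complex fps" where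
  "lhs_egf u \<beta> = Abs_fps (\<lambda>n.
      (\<Sum>\<sigma> \<in> {\<sigma>. \<sigma> permutes {1..n}}. u ^ lrda n \<sigma> * \<beta> ^ RLmin n \<sigma>) / of_nat (fact n))"

(* cosh(w t/2) = sum_k w^(2k) t^(2k) / (2^(2k) (2k)!) *)
definition cosh_half :: "complex \<Rightarrow> complex fps" where
  "cosh_half w = Abs_fps (\<lambda>n. if even n then w ^ n / (2 ^ n * of_nat (fact n)) else 0)"

(* sinh(w t/2) / w = sum_k w^(2k) t^(2k+1) / (2^(2k+1) (2k+1)!)  (even in w) *)
definition sinh_half_over :: "complex \<Rightarrow> complex fps" where
  "sinh_half_over w = Abs_fps (\<lambda>n. if odd n then w ^ (n - 1) / (2 ^ n * of_nat (fact n)) else 0)"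

(* G^c := exp(c log G), for G with constant term 1 *)
definition fps_powc :: "complex fps \<Rightarrow> complex \<Rightarrow> complex fps" where
  "fps_powc G c = fps_exp 1 oo (fps_const c * (fps_ln 1 oo (G - 1)))"

end

theory Submission
  imports Defs "HOL-Combinatorics.Multiset_Permutations"
begin

unbundle fps_syntax

primrec gda :: "nat \<Rightarrow> bool \<Rightarrow> nat list \<Rightarrow> nat" where
"gda p r [] = 0" |
"gda p r (x # xs) = (if p < x \<and> (case xs of [] \<Rightarrow> r | y # _ \<Rightarrow> x < y) then 1 else 0) + gda x r xs"

primrec rlm :: "nat list \<Rightarrow> nat" where
"rlm [] = 0" | "rlm (x#xs) = (if \<forall>y\<in>set xs. x < y then 1 else 0) + rlm xs"

lemma gda_first: "xs \<noteq> [] \<Longrightarrow> p < hd xs \<Longrightarrow> q < hd xs \<Longrightarrow> gda p r xs = gda q r xs"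
  by (cases xs) auto

lemma gda_split: "\<forall>x\<in>set \<alpha>. m < x \<Longrightarrow> \<forall>x\<in>set \<gamma>. m < x \<Longrightarrow>
  gda p r (\<alpha> @ m # \<gamma>) = gda p False \<alpha> + (if \<alpha> = [] \<and> p < m \<and> (\<gamma> \<noteq> [] \<or> r) then 1 else 0) + gda m r \<gamma>"
proof (induction \<alpha> arbitrary: p)
  case Nil then show ?case by (cases \<gamma>) auto
next
  case (Cons a \<alpha>)
  show ?case using Cons by (cases \<alpha>) auto
qed

lemma rlm_split: "\<forall>x\<in>set \<alpha>. m < x \<Longrightarrow> \<forall>x\<in>set \<gamma>. m < x \<Longrightarrow> rlm (\<alpha> @ m # \<gamma>) = rlm \<gamma> + 1"
  by (induction \<alpha>) auto

lemma gda_sum: "gda p r xs = (\<Sum>i<length xs. if (if i = 0 then p else xs!(i-1)) < xs!i \<and>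
   (if Suc i = length xs then r else xs!i < xs!(Suc i)) then 1 else 0)"
proof (induction xs arbitrary: p)
  case Nil then show ?case by simp
next
  case (Cons x xs)
  have e: "(if p < x \<and> (case xs of [] \<Rightarrow> r | y # _ \<Rightarrow> x < y) then 1 else 0) =
     (if (if 0 = (0::nat) then p else (x#xs)!(0-1)) < (x#xs)!0 \<and>
     (if Suc 0 = length (x#xs) then r else (x#xs)!0 < (x#xs)!(Suc 0)) then 1 else (0::nat))"
    by (cases xs) auto
  have f: "(\<Sum>i<length xs. if (if i = 0 then x else xs!(i-1)) < xs!i \<and>
   (if Suc i = length xs then r else xs!i < xs!(Suc i)) then 1 else 0) =
    (\<Sum>i<length xs. if (if Suc i = 0 then p else (x#xs)!(Suc i-1)) < (x#xs)!Suc i \<and>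
   (if Suc (Suc i) = length (x#xs) then r else (x#xs)!Suc i < (x#xs)!(Suc (Suc i))) then 1 else (0::nat))"
    by (rule sum.cong) (auto simp: nth_Cons')
  show ?case
    unfolding gda.simps Cons[of x] length_Cons sum.lessThan_Suc_shift e f ..
qed

lemma all_shift: "(\<forall>j. 0 < j \<and> j < Suc n \<longrightarrow> Q j) = (\<forall>k<n. Q (Suc k))"
proof (rule iffI)
  assume "\<forall>j. 0 < j \<and> j < Suc n \<longrightarrow> Q j" then show "\<forall>k<n. Q (Suc k)" by simp
next
  assume h: "\<forall>k<n. Q (Suc k)"
  show "\<forall>j. 0 < j \<and> j < Suc n \<longrightarrow> Q j"
  proof (intro allI impI)
    fix j assume "0 < j \<and> j < Suc n"
    then obtain k where "j = Suc k" "k < n" by (cases j) auto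
    then show "Q j" using h by simp
  qed
qed

lemma all_shift2: "(\<forall>j. Suc i < j \<and> j < Suc n \<longrightarrow> Q j) = (\<forall>k. i < k \<and> k < n \<longrightarrow> Q (Suc k))"
proof (rule iffI)
  assume "\<forall>j. Suc i < j \<and> j < Suc n \<longrightarrow> Q j" then show "\<forall>k. i < k \<and> k < n \<longrightarrow> Q (Suc k)" by simp
next
  assume h: "\<forall>k. i < k \<and> k < n \<longrightarrow> Q (Suc k)"
  show "\<forall>j. Suc i < j \<and> j < Suc n \<longrightarrow> Q j"
  proof (intro allI impI)
    fix j assume "Suc i < j \<and> j < Suc n"
    then obtain k where "j = Suc k" "k < n" "i < k" by (cases j) auto
    then show "Q j" using h by simp
  qed
qed

lemma rlm_sum: "rlm xs = (\<Sum>i<length xs. if (\<forall>j. i < j \<and> j < length xs \<longrightarrow> xs!i < xs!j) then 1 else 0)"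
proof (induction xs)
  case Nil then show ?case by simp
next
  case (Cons x xs)
  have a: "(\<forall>y\<in>set xs. x < y) = (\<forall>j. 0 < j \<and> j < length (x#xs) \<longrightarrow> (x#xs)!0 < (x#xs)!j)"
    unfolding length_Cons all_shift by (simp add: all_set_conv_all_nth)
  have b: "(\<Sum>i<length xs. if (\<forall>j. i < j \<and> j < length xs \<longrightarrow> xs!i < xs!j) then 1 else 0) =
     (\<Sum>i<length xs. if (\<forall>j. Suc i < j \<and> j < length (x#xs) \<longrightarrow> (x#xs)!Suc i < (x#xs)!j) then 1 else (0::nat))"
    unfolding length_Cons all_shift2 by simp
  define F where "F = (\<lambda>i. if (\<forall>j. i < j \<and> j < length (x#xs) \<longrightarrow> (x#xs)!i < (x#xs)!j) then 1 else (0::nat))"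
  have "rlm (x#xs) = F 0 + (\<Sum>i<length xs. F (Suc i))"
    unfolding F_def by (simp only: rlm.simps Cons a b)
  also have "\<dots> = (\<Sum>i<length (x#xs). F i)"
    by (simp only: length_Cons sum.lessThan_Suc_shift)
  finally show ?case unfolding F_def .
qed

definition wt :: "complex \<Rightarrow> complex \<Rightarrow> bool \<Rightarrow> nat list \<Rightarrow> complex" where
  "wt u b r xs = u ^ gda 0 r xs * b ^ rlm xs"

fun PP :: "complex \<Rightarrow> complex \<Rightarrow> bool \<Rightarrow> nat \<Rightarrow> complex" where
"PP u b r 0 = 1" |
"PP u b r (Suc n) = b * (\<Sum>j\<le>n. of_nat (n choose j) * PP u 1 False j * PP u b r (n - j) *
     (if j = 0 \<and> (r \<or> 0 < n) then u else 1))"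

lemma sum_pow_card:
  assumes "finite A"
  shows "(\<Sum>T\<in>Pow A. F (card T)) = (\<Sum>j\<le>card A. of_nat (card A choose j) * (F j :: complex))"
proof -
  have "(\<Sum>T\<in>Pow A. F (card T)) = (\<Sum>j\<le>card A. \<Sum>T\<in>{T. T \<in> Pow A \<and> card T = j}. F (card T))"
    by (rule sum.group[symmetric]) (use assms in \<open>auto simp: card_mono\<close>)
  also have "\<dots> = (\<Sum>j\<le>card A. of_nat (card A choose j) * F j)"
  proof (rule sum.cong[OF refl])
    fix j
    have "(\<Sum>T\<in>{T. T \<in> Pow A \<and> card T = j}. F (card T)) = (\<Sum>T\<in>{T. T \<subseteq> A \<and> card T = j}. F j)"
      by (rule sum.cong) auto
    also have "\<dots> = of_nat (card A choose j) * F j"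
      using n_subsets[OF assms, of j] by simp
    finally show "(\<Sum>T\<in>{T. T \<in> Pow A \<and> card T = j}. F (card T)) = of_nat (card A choose j) * F j" .
  qed
  finally show ?thesis .
qed

lemma perm_decomp:
  fixes m :: nat
  assumes fin: "finite S'" and m: "\<forall>x\<in>S'. m < x"
  shows "permutations_of_set (insert m S') =
     (\<lambda>(T,(\<alpha>,\<gamma>)). \<alpha> @ m # \<gamma>) ` (SIGMA T:Pow S'. permutations_of_set T \<times> permutations_of_set (S' - T))"
    (is "?L = ?f ` ?I")
proof
  have mn: "m \<notin> S'"
  proof
    assume "m \<in> S'" with m have "m < m" by blast
    then show False by simp
  qed
  show "?f ` ?I \<subseteq> ?L"
  proof
    fix x assume "x \<in> ?f ` ?I"
    then obtain y where y: "y \<in> ?I" "x = ?f y" by blast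
    obtain T a c where yd: "y = (T, a, c)" by (cases y) blast
    have T: "T \<subseteq> S'" using y yd by simp
    have a: "set a = T" "distinct a" using y yd by (simp_all add: permutations_of_set_def)
    have c: "set c = S' - T" "distinct c" using y yd by (simp_all add: permutations_of_set_def)
    have x: "x = a @ m # c" using y yd by simp
    have "m \<notin> set a" "m \<notin> set c" using a c T mn by auto
    moreover have "set a \<inter> set c = {}" using a c by auto
    moreover have "set (a @ m # c) = insert m S'" using a c T by auto
    ultimately show "x \<in> ?L" using x a c unfolding permutations_of_set_def by simp
  qed
  show "?L \<subseteq> ?f ` ?I"
  proof
    fix xs assume xs: "xs \<in> ?L"
    then have "m \<in> set xs" by (simp add: permutations_of_set_def)
    then obtain a c where xsd: "xs = a @ m # c" by (metis split_list)
    have d: "distinct (a @ m # c)" "set (a @ m # c) = insert m S'" using xs xsd by (simp_all add: permutations_of_set_def)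
    have ma: "m \<notin> set a" "m \<notin> set c" "set a \<inter> set c = {}" using d(1) by auto
    have sa: "set a \<subseteq> S'"
    proof
      fix x assume xa: "x \<in> set a"
      then have "x \<in> set (a @ m # c)" by simp
      then have "x \<in> insert m S'" unfolding d(2) .
      moreover have "x \<noteq> m" using xa ma(1) by blast
      ultimately show "x \<in> S'" by simp
    qed
    have sc: "set c = S' - set a"
    proof
      show "set c \<subseteq> S' - set a"
      proof
        fix x assume xc: "x \<in> set c"
        then have "x \<in> set (a @ m # c)" by simp
        then have "x \<in> insert m S'" unfolding d(2) .
        moreover have "x \<noteq> m" "x \<notin> set a" using xc ma by blast+
        ultimately show "x \<in> S' - set a" by simp
      qed
      show "S' - set a \<subseteq> set c"
      proof
        fix x assume xS: "x \<in> S' - set a"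
        then have "x \<in> insert m S'" by simp
        then have "x \<in> set (a @ m # c)" unfolding d(2) .
        moreover have "x \<noteq> m" "x \<notin> set a" using xS mn by blast+
        ultimately show "x \<in> set c" by simp
      qed
    qed
    have "(set a, (a, c)) \<in> ?I"
      using sa sc d(1) by (simp add: permutations_of_set_def)
    moreover have "xs = ?f (set a, (a, c))" using xsd by simp
    ultimately show "xs \<in> ?f ` ?I" by (rule rev_image_eqI)
  qed
qed

lemma perm_decomp_inj:
  fixes m :: nat
  assumes m: "m \<notin> S'"
  shows "inj_on (\<lambda>(T,(\<alpha>,\<gamma>)). \<alpha> @ m # \<gamma>) (SIGMA T:Pow S'. permutations_of_set T \<times> permutations_of_set (S' - T))"
proof (rule inj_onI)
  fix x y assume x: "x \<in> (SIGMA T:Pow S'. permutations_of_set T \<times> permutations_of_set (S' - T))"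
    and y: "y \<in> (SIGMA T:Pow S'. permutations_of_set T \<times> permutations_of_set (S' - T))"
    and e: "(\<lambda>(T,(\<alpha>,\<gamma>)). \<alpha> @ m # \<gamma>) x = (\<lambda>(T,(\<alpha>,\<gamma>)). \<alpha> @ m # \<gamma>) y"
  obtain T a c where xd: "x = (T, a, c)" by (cases x) blast
  obtain T2 a2 c2 where yd: "y = (T2, a2, c2)" by (cases y) blast
  have h: "T \<subseteq> S'" "set a = T" "set c = S' - T" "set a2 = T2" "a @ m # c = a2 @ m # c2"
    using x y e xd yd by (simp_all add: permutations_of_set_def)
  have "m \<notin> set a" "m \<notin> set c" using h m by auto
  then have "a = a2 \<and> c = c2" using h(5) append_Cons_eq_iff by metis
  then show "x = y" using h xd yd by simp
qed

lemma wt_split: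
  assumes "\<forall>x\<in>set a. m < x" "\<forall>x\<in>set c. m < x" "0 < m"
  shows "wt u b r (a @ m # c) = b * wt u 1 False a * wt u b r c * (if a = [] \<and> (c \<noteq> [] \<or> r) then u else 1)"
proof -
  have g: "gda m r c = gda 0 r c"
  proof (cases c)
    case (Cons y ys) then show ?thesis using assms gda_first[of c m 0 r] by auto
  qed simp
  show ?thesis
    using assms unfolding wt_def gda_split[OF assms(1,2)] rlm_split[OF assms(1,2)] g
    by (cases "a = [] \<and> (c \<noteq> [] \<or> r)") (auto simp: power_add)
qed

lemma sum_times_prod:
  "(\<Sum>ac\<in>A \<times> B. K * (f (fst ac) * g (snd ac))) = (K::complex) * ((\<Sum>a\<in>A. f a) * (\<Sum>c\<in>B. g c))"
proof -
  have "(\<Sum>ac\<in>A \<times> B. f (fst ac) * g (snd ac)) = (\<Sum>a\<in>A. \<Sum>c\<in>B. f a * g c)"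
    by (simp add: sum.cartesian_product split_def)
  also have "\<dots> = (\<Sum>a\<in>A. f a) * (\<Sum>c\<in>B. g c)"
    by (simp add: sum_product)
  finally show ?thesis by (simp add: sum_distrib_left[symmetric])
qed

lemma main_comb:
  "finite S \<Longrightarrow> 0 \<notin> S \<Longrightarrow> (\<Sum>xs\<in>permutations_of_set S. wt u b r xs) = PP u b r (card S)"
proof (induction "card S" arbitrary: S b r rule: less_induct)
  case less
  show ?case
  proof (cases "S = {}")
    case True then show ?thesis by (simp add: wt_def)
  next
    case False
    define m where "m = Min S"
    define S' where "S' = S - {m}"
    define n where "n = card S'"
    have mS: "m \<in> S" using False less(2) m_def by simp
    have Sdef: "S = insert m S'" using mS S'_def by auto
    have finS': "finite S'" using less(2) S'_def by simp
    have mnot: "m \<notin> S'" using S'_def by simp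
    have cardS: "card S = Suc n" using Sdef finS' mnot n_def by simp
    have mlt: "\<forall>x\<in>S'. m < x" using less(2) S'_def m_def by (metis DiffE Min_le insertCI le_neq_implies_less)
    have m0: "0 < m" using mS less(3) by (cases m) auto
    have IH: "(\<Sum>xs\<in>permutations_of_set T. wt u b' r' xs) = PP u b' r' (card T)" if "T \<subseteq> S'" for T b' r'
    proof -
      have "card T \<le> n" using that finS' n_def card_mono by blast
      then show ?thesis using less(1)[of T] that finS' less(3) cardS S'_def
        by (metis Diff_subset finite_subset less_Suc_eq_le subset_iff)
    qed
    let ?f = "\<lambda>(T,(\<alpha>,\<gamma>)). \<alpha> @ m # \<gamma>"
    let ?I = "SIGMA T:Pow S'. permutations_of_set T \<times> permutations_of_set (S' - T)"
    have "(\<Sum>xs\<in>permutations_of_set S. wt u b r xs) = (\<Sum>xs\<in>?f ` ?I. wt u b r xs)"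
      unfolding Sdef perm_decomp[OF finS' mlt] ..
    also have "\<dots> = (\<Sum>x\<in>?I. wt u b r (?f x))"
      by (rule sum.reindex[OF perm_decomp_inj[OF mnot], unfolded comp_def])
    also have "\<dots> = (\<Sum>T\<in>Pow S'. \<Sum>ac\<in>permutations_of_set T \<times> permutations_of_set (S' - T). wt u b r (?f (T, ac)))"
      by (subst sum.Sigma) (use finS' in \<open>auto intro: sum.cong simp: split_def\<close>)
    also have "\<dots> = (\<Sum>T\<in>Pow S'. b * PP u 1 False (card T) * PP u b r (n - card T) *
         (if card T = 0 \<and> (r \<or> 0 < n) then u else 1))"
    proof (rule sum.cong[OF refl])
      fix T assume T: "T \<in> Pow S'"
      have finT: "finite T" using T finS' finite_subset by auto
      have cD: "card (S' - T) = n - card T" using T finS' n_def by (simp add: card_Diff_subset finT)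
      have c0: "(a = []) = (card T = 0)" if "a \<in> permutations_of_set T" for a
        using that finT by (auto simp: permutations_of_set_def)
      have c1: "(c \<noteq> []) = (card T < n)" if "c \<in> permutations_of_set (S' - T)" for c
      proof -
        have sc: "set c = S' - T" using that by (simp add: permutations_of_set_def)
        have "(c \<noteq> []) = (set c \<noteq> {})" by simp
        then have "(c \<noteq> []) = (S' - T \<noteq> {})" unfolding sc .
        also have "\<dots> = (card T < n)" using T finS' n_def
          by (metis Diff_eq_empty_iff PowD card_seteq psubset_card_mono psubsetI order.strict_iff_not)
        finally show ?thesis .
      qed
      have "(\<Sum>ac\<in>permutations_of_set T \<times> permutations_of_set (S' - T). wt u b r (?f (T, ac)))
         = (\<Sum>ac\<in>permutations_of_set T \<times> permutations_of_set (S' - T).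
             b * (if card T = 0 \<and> (r \<or> 0 < n) then u else 1) * (wt u 1 False (fst ac) * wt u b r (snd ac)))"
      proof (rule sum.cong[OF refl])
        fix ac assume acI: "ac \<in> permutations_of_set T \<times> permutations_of_set (S' - T)"
        obtain a c where acd: "ac = (a, c)" by (cases ac)
        have ac: "a \<in> permutations_of_set T" "c \<in> permutations_of_set (S' - T)" using acI acd by auto
        have "\<forall>x\<in>set a. m < x" "\<forall>x\<in>set c. m < x" using ac T mlt by (auto simp: permutations_of_set_def)
        then have "wt u b r (a @ m # c) = b * wt u 1 False a * wt u b r c * (if a = [] \<and> (c \<noteq> [] \<or> r) then u else 1)"
          using wt_split m0 by blast
        moreover have "(a = [] \<and> (c \<noteq> [] \<or> r)) = (card T = 0 \<and> (r \<or> 0 < n))"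
          using c0[OF ac(1)] c1[OF ac(2)] by auto
        ultimately show "wt u b r (?f (T, ac)) = b * (if card T = 0 \<and> (r \<or> 0 < n) then u else 1) * (wt u 1 False (fst ac) * wt u b r (snd ac))"
          unfolding acd by simp
      qed
      also have "\<dots> = b * (if card T = 0 \<and> (r \<or> 0 < n) then u else 1) *
          ((\<Sum>a\<in>permutations_of_set T. wt u 1 False a) * (\<Sum>c\<in>permutations_of_set (S' - T). wt u b r c))"
        by (rule sum_times_prod)
      also have "\<dots> = b * PP u 1 False (card T) * PP u b r (n - card T) * (if card T = 0 \<and> (r \<or> 0 < n) then u else 1)"
        using IH[of T] IH[of "S' - T"] T cD by auto
      finally show "(\<Sum>ac\<in>permutations_of_set T \<times> permutations_of_set (S' - T). wt u b r (?f (T, ac))) =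
         b * PP u 1 False (card T) * PP u b r (n - card T) * (if card T = 0 \<and> (r \<or> 0 < n) then u else 1)" .
    qed
    also have "\<dots> = (\<Sum>j\<le>n. of_nat (n choose j) * (b * PP u 1 False j * PP u b r (n - j) *
         (if j = 0 \<and> (r \<or> 0 < n) then u else 1)))"
      using sum_pow_card[OF finS'] n_def by simp
    also have "\<dots> = b * (\<Sum>j\<le>n. of_nat (n choose j) * PP u 1 False j * PP u b r (n - j) *
         (if j = 0 \<and> (r \<or> 0 < n) then u else 1))"
      by (simp add: sum_distrib_left mult_ac)
    also have "\<dots> = PP u b r (card S)"
      unfolding cardS by simp
    finally show ?thesis .
  qed
qed




lemma card_shift: "card {i\<in>{1..n}. C i} = (\<Sum>k<n. if C (Suc k) then 1 else (0::nat))"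
proof -
  have "{i\<in>{1..n}. C i} = Suc ` {k\<in>{..<n}. C (Suc k)}"
  proof
    show "{i \<in> {1..n}. C i} \<subseteq> Suc ` {k \<in> {..<n}. C (Suc k)}"
    proof
      fix i assume "i \<in> {i \<in> {1..n}. C i}"
      then have "i = Suc (i - 1)" "i - 1 \<in> {k \<in> {..<n}. C (Suc k)}" by auto
      then show "i \<in> Suc ` {k \<in> {..<n}. C (Suc k)}" by (metis imageI)
    qed
  qed auto
  then have "card {i\<in>{1..n}. C i} = card {k\<in>{..<n}. C (Suc k)}"
    by (simp add: card_image)
  also have "\<dots> = (\<Sum>k\<in>{k\<in>{..<n}. C (Suc k)}. 1)" by simp
  also have "\<dots> = (\<Sum>k<n. if C (Suc k) then 1 else (0::nat))"
    by (rule sum.inter_filter) simp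
  finally show ?thesis .
qed

lemma all_shift3: "(\<forall>j\<in>{Suc (Suc k)..n}. Q j) = (\<forall>j. k < j \<and> j < n \<longrightarrow> Q (Suc j))"
proof (rule iffI)
  assume h: "\<forall>j\<in>{Suc (Suc k)..n}. Q j" show "\<forall>j. k < j \<and> j < n \<longrightarrow> Q (Suc j)"
    using h by auto
next
  assume h: "\<forall>j. k < j \<and> j < n \<longrightarrow> Q (Suc j)"
  show "\<forall>j\<in>{Suc (Suc k)..n}. Q j"
  proof
    fix j assume "j \<in> {Suc (Suc k)..n}"
    then obtain i where "j = Suc i" "k < i" "i < n" by (cases j) auto
    then show "Q j" using h by simp
  qed
qed

lemma lrda_gda:
  "lrda n \<sigma> = gda 0 True (map \<sigma> [1..<Suc n])"
proof -
  let ?xs = "map \<sigma> [1..<Suc n]"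
  have nth: "\<And>k. k < n \<Longrightarrow> ?xs ! k = \<sigma> (Suc k)" by (simp del: upt_Suc)
  have "lrda n \<sigma> = (\<Sum>k<n. if (if Suc k = 1 then 0 else \<sigma> (Suc k - 1)) < \<sigma> (Suc k) \<and>
      (Suc k = n \<or> \<sigma> (Suc k) < \<sigma> (Suc k + 1)) then 1 else 0)"
    unfolding lrda_def by (rule card_shift)
  also have "\<dots> = gda 0 True ?xs"
    unfolding gda_sum length_map length_upt
  proof (rule sum.cong)
    fix k assume k: "k \<in> {..<Suc n - 1}"
    then have k': "k < n" by simp
    have a: "(if Suc k = 1 then 0 else \<sigma> (Suc k - 1)) = (if k = 0 then 0 else ?xs ! (k - 1))"
      using k' nth by (cases k) (auto simp del: upt_Suc)
    have b: "(Suc k = n \<or> \<sigma> (Suc k) < \<sigma> (Suc k + 1)) = (if Suc k = Suc n - 1 then True else ?xs ! k < ?xs ! Suc k)"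
      using k' nth[of k] nth[of "Suc k"] by (auto simp del: upt_Suc)
    show "(if (if Suc k = 1 then 0 else \<sigma> (Suc k - 1)) < \<sigma> (Suc k) \<and>
      (Suc k = n \<or> \<sigma> (Suc k) < \<sigma> (Suc k + 1)) then 1 else 0) =
      (if (if k = 0 then 0 else ?xs ! (k - 1)) < ?xs ! k \<and>
          (if Suc k = Suc n - 1 then True else ?xs ! k < ?xs ! Suc k) then 1 else 0)"
      unfolding a b nth[OF k'] ..
  qed simp
  finally show ?thesis .
qed

lemma RLmin_rlm:
  "RLmin n \<sigma> = rlm (map \<sigma> [1..<Suc n])"
proof -
  let ?xs = "map \<sigma> [1..<Suc n]"
  have nth: "\<And>k. k < n \<Longrightarrow> ?xs ! k = \<sigma> (Suc k)" by (simp del: upt_Suc)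
  have "RLmin n \<sigma> = (\<Sum>k<n. if (\<forall>j\<in>{Suc k + 1..n}. \<sigma> (Suc k) < \<sigma> j) then 1 else 0)"
    unfolding RLmin_def by (rule card_shift)
  also have "\<dots> = rlm ?xs"
    unfolding rlm_sum length_map length_upt
  proof (rule sum.cong)
    fix k assume k: "k \<in> {..<Suc n - 1}"
    then have k': "k < n" by simp
    have "(\<forall>j\<in>{Suc k + 1..n}. \<sigma> (Suc k) < \<sigma> j) = (\<forall>j. k < j \<and> j < n \<longrightarrow> \<sigma> (Suc k) < \<sigma> (Suc j))"
      using all_shift3[of k n "\<lambda>j. \<sigma> (Suc k) < \<sigma> j"] by simp
    also have "\<dots> = (\<forall>j. k < j \<and> j < Suc n - 1 \<longrightarrow> ?xs ! k < ?xs ! j)"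
      using k' by (auto simp: nth simp del: upt_Suc)
    finally show "(if (\<forall>j\<in>{Suc k + 1..n}. \<sigma> (Suc k) < \<sigma> j) then 1 else 0) =
      (if (\<forall>j. k < j \<and> j < Suc n - 1 \<longrightarrow> ?xs ! k < ?xs ! j) then 1 else 0)" by simp
  qed simp
  finally show ?thesis .
qed

lemma perm_list_bij:
  "bij_betw (\<lambda>\<sigma>. map \<sigma> [1..<Suc n]) {\<sigma>. \<sigma> permutes {1..n}} (permutations_of_set {1..n})"
  unfolding bij_betw_def
proof (intro conjI)
  show "inj_on (\<lambda>\<sigma>. map \<sigma> [1..<Suc n]) {\<sigma>. \<sigma> permutes {1..n}}"
  proof (rule inj_onI)
    fix \<sigma> \<tau> assume s: "\<sigma> \<in> {\<sigma>. \<sigma> permutes {1..n}}" and t: "\<tau> \<in> {\<sigma>. \<sigma> permutes {1..n}}"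
      and e: "map \<sigma> [1..<Suc n] = map \<tau> [1..<Suc n]"
    show "\<sigma> = \<tau>"
    proof
      fix x
      show "\<sigma> x = \<tau> x"
      proof (cases "x \<in> {1..n}")
        case True
        then have "x \<in> set [1..<Suc n]" by auto
        then show ?thesis using e by (metis map_eq_conv)
      next
        case False
        then show ?thesis using s t by (simp add: permutes_not_in)
      qed
    qed
  qed
  show "(\<lambda>\<sigma>. map \<sigma> [1..<Suc n]) ` {\<sigma>. \<sigma> permutes {1..n}} = permutations_of_set {1..n}"
  proof
    show "(\<lambda>\<sigma>. map \<sigma> [1..<Suc n]) ` {\<sigma>. \<sigma> permutes {1..n}} \<subseteq> permutations_of_set {1..n}"
    proof clarify
      fix \<sigma> assume s: "\<sigma> permutes {1..n}"
      have st: "set [1..<Suc n] = {1..n}" by auto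
      have "distinct (map \<sigma> [1..<Suc n])"
        using permutes_inj_on[OF s] st by (simp add: distinct_map)
      moreover have "set (map \<sigma> [1..<Suc n]) = {1..n}"
        using permutes_image[OF s] st by simp
      ultimately show "map \<sigma> [1..<Suc n] \<in> permutations_of_set {1..n}"
        by (simp add: permutations_of_set_def)
    qed
    show "permutations_of_set {1..n} \<subseteq> (\<lambda>\<sigma>. map \<sigma> [1..<Suc n]) ` {\<sigma>. \<sigma> permutes {1..n}}"
    proof
      fix xs assume xs: "xs \<in> permutations_of_set {1..n}"
      then have d: "distinct xs" and sx: "set xs = {1..n}" by (simp_all add: permutations_of_set_def)
      have len: "length xs = n" using distinct_card[OF d] sx by simp
      define \<sigma> where "\<sigma> = (\<lambda>i. if i \<in> {1..n} then xs ! (i - 1) else i)"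
      have inj: "inj_on \<sigma> {1..n}"
      proof (rule inj_onI)
        fix i j assume i: "i \<in> {1..n}" and j: "j \<in> {1..n}" and e: "\<sigma> i = \<sigma> j"
        then have "xs ! (i - 1) = xs ! (j - 1)" by (simp add: \<sigma>_def)
        moreover have "i - 1 < length xs" "j - 1 < length xs" using i j len by auto
        ultimately have "i - 1 = j - 1" using d nth_eq_iff_index_eq by blast
        moreover have "1 \<le> i" "1 \<le> j" using i j by auto
        ultimately show "i = j" by arith
      qed
      have sub: "\<sigma> ` {1..n} \<subseteq> {1..n}"
      proof
        fix y assume "y \<in> \<sigma> ` {1..n}"
        then obtain i where i: "i \<in> {1..n}" "y = xs ! (i - 1)" by (auto simp: \<sigma>_def)
        then have "y \<in> set xs" using len by auto
        then show "y \<in> {1..n}" using sx by simp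
      qed
      have "card (\<sigma> ` {1..n}) = card {1..n}" using card_image[OF inj] .
      then have img: "\<sigma> ` {1..n} = {1..n}" using sub by (simp add: card_subset_eq)
      have perm: "\<sigma> permutes {1..n}"
        by (rule bij_imp_permutes) (use inj img in \<open>auto simp: bij_betw_def \<sigma>_def\<close>)
      have "map \<sigma> [1..<Suc n] = xs"
        by (rule nth_equalityI) (auto simp: len \<sigma>_def simp del: upt_Suc)
      then show "xs \<in> (\<lambda>\<sigma>. map \<sigma> [1..<Suc n]) ` {\<sigma>. \<sigma> permutes {1..n}}"
        using perm by blast
    qed
  qed
qed

lemma lhs_coeff: "lhs_egf u \<beta> $ n = PP u \<beta> True n / fact n"
proof -
  have "(\<Sum>\<sigma>\<in>{\<sigma>. \<sigma> permutes {1..n}}. u ^ lrda n \<sigma> * \<beta> ^ RLmin n \<sigma>) =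
        (\<Sum>\<sigma>\<in>{\<sigma>. \<sigma> permutes {1..n}}. wt u \<beta> True (map \<sigma> [1..<Suc n]))"
    by (simp add: wt_def lrda_gda RLmin_rlm)
  also have "\<dots> = (\<Sum>xs\<in>permutations_of_set {1..n}. wt u \<beta> True xs)"
    by (rule sum.reindex_bij_betw[OF perm_list_bij])
  also have "\<dots> = PP u \<beta> True n"
    using main_comb[of "{1..n}" u \<beta> True] by simp
  finally show ?thesis by (simp add: lhs_egf_def)
qed




lemma egf_deriv: "fps_deriv (Abs_fps (\<lambda>n. a n / fact n)) = Abs_fps (\<lambda>n. (a (Suc n) :: complex) / fact n)"
proof (rule fps_ext)
  fix n
  have "fact (Suc n) = (of_nat (n + 1) :: complex) * fact n" by (simp add: fact_Suc)
  then show "fps_deriv (Abs_fps (\<lambda>n. a n / fact n)) $ n = Abs_fps (\<lambda>n. a (Suc n) / fact n) $ n"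
    by (simp add: field_simps del: of_nat_Suc)
qed

lemma egf_mult: "(Abs_fps (\<lambda>n. a n / fact n) * Abs_fps (\<lambda>n. b n / fact n)) $ n =
    (\<Sum>j\<le>n. of_nat (n choose j) * a j * (b (n - j) :: complex)) / fact n"
proof -
  have "(Abs_fps (\<lambda>n. a n / fact n) * Abs_fps (\<lambda>n. b n / fact n)) $ n =
      (\<Sum>j\<le>n. a j / fact j * (b (n - j) / fact (n - j)))"
    by (simp add: fps_mult_nth atLeast0AtMost)
  also have "\<dots> = (\<Sum>j\<le>n. of_nat (n choose j) * a j * b (n - j) / fact n)"
  proof (rule sum.cong[OF refl])
    fix j assume "j \<in> {..n}"
    then have j: "j \<le> n" by simp
    have "fact n \<noteq> (0::complex)" by simp
    show "a j / fact j * (b (n - j) / fact (n - j)) = of_nat (n choose j) * a j * b (n - j) / fact n"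
      unfolding binomial_fact[OF j] by (simp add: field_simps)
  qed
  also have "\<dots> = (\<Sum>j\<le>n. of_nat (n choose j) * a j * b (n - j)) / fact n"
    by (simp add: sum_divide_distrib)
  finally show ?thesis .
qed

lemma sum_delta0: "(\<Sum>j\<le>(n::nat). if j = 0 then g else 0) = (g::complex)"
  by (induct n) auto

lemma sum_if0: "(\<Sum>j\<le>(n::nat). f j * (if j = 0 \<and> c then u else 1)) = (\<Sum>j\<le>n. f j) + (if c then (u - 1) * f 0 else (0::complex))"
proof -
  have "(\<Sum>j\<le>n. f j * (if j = 0 \<and> c then u else 1)) = (\<Sum>j\<le>n. f j + (if j = 0 then (if c then (u - 1) * f 0 else 0) else 0))"
    by (rule sum.cong) (auto simp: algebra_simps)
  also have "\<dots> = (\<Sum>j\<le>n. f j) + (\<Sum>j\<le>n. (if j = 0 then (if c then (u - 1) * f 0 else 0) else 0))"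
    by (rule sum.distrib)
  also have "\<dots> = (\<Sum>j\<le>n. f j) + (if c then (u - 1) * f 0 else 0)"
    using sum_delta0 by simp
  finally show ?thesis .
qed

definition Aser :: "complex \<Rightarrow> complex \<Rightarrow> complex fps" where
  "Aser u b = Abs_fps (\<lambda>n. PP u b True n / fact n)"
definition Bser :: "complex \<Rightarrow> complex fps" where
  "Bser u = Abs_fps (\<lambda>n. PP u 1 False n / fact n)"

lemma A_deriv: "fps_deriv (Aser u b) = fps_const b * (Bser u + fps_const (u - 1)) * Aser u b"
proof (rule fps_ext)
  fix n
  have "fps_deriv (Aser u b) $ n = PP u b True (Suc n) / fact n"
    unfolding Aser_def egf_deriv by simp
  also have "\<dots> = b * ((\<Sum>j\<le>n. of_nat (n choose j) * PP u 1 False j * PP u b True (n - j)) + (u - 1) * PP u b True n) / fact n"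
    by (simp add: sum_if0[where c=True, simplified])
  also have "\<dots> = (fps_const b * (Bser u + fps_const (u - 1)) * Aser u b) $ n"
    unfolding mult.assoc fps_mult_left_const_nth distrib_right
    by (simp add: Bser_def Aser_def egf_mult[unfolded] field_simps fps_mult_left_const_nth)
  finally show "fps_deriv (Aser u b) $ n = (fps_const b * (Bser u + fps_const (u - 1)) * Aser u b) $ n" .
qed

lemma B_deriv: "fps_deriv (Bser u) = Bser u * Bser u + fps_const (u - 1) * (Bser u - 1)"
proof (rule fps_ext)
  fix n
  have "fps_deriv (Bser u) $ n = PP u 1 False (Suc n) / fact n"
    unfolding Bser_def egf_deriv by simp
  also have "\<dots> = ((\<Sum>j\<le>n. of_nat (n choose j) * PP u 1 False j * PP u 1 False (n - j)) + (if 0 < n then (u - 1) * PP u 1 False n else 0)) / fact n"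
    by (simp add: sum_if0[where c="0 < n", simplified])
  also have "\<dots> = (Bser u * Bser u + fps_const (u - 1) * (Bser u - 1)) $ n"
    by (simp add: Bser_def egf_mult field_simps fps_mult_left_const_nth)
  finally show "fps_deriv (Bser u) $ n = (Bser u * Bser u + fps_const (u - 1) * (Bser u - 1)) $ n" .
qed




lemma ode_zero:
  fixes Y M :: "complex fps"
  assumes d: "fps_deriv Y = M * Y" and z: "Y $ 0 = 0"
  shows "Y = 0"
proof -
  have "Y $ n = 0" for n
  proof (induction n rule: less_induct)
    case (less n)
    show ?case
    proof (cases n)
      case 0 then show ?thesis using z by simp
    next
      case (Suc m)
      have "of_nat (m + 1) * Y $ (m + 1) = fps_deriv Y $ m" by simp
      also have "\<dots> = (M * Y) $ m" using d by simp
      also have "\<dots> = (\<Sum>i=0..m. M $ i * Y $ (m - i))" by (simp add: fps_mult_nth)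
      also have "\<dots> = 0"
        by (rule sum.neutral) (use less Suc in auto)
      finally have "of_nat (m + 1) * Y $ (m + 1) = 0" .
      then show ?thesis using Suc by (simp del: of_nat_Suc)
    qed
  qed
  then show ?thesis by (simp add: fps_ext)
qed

lemma aux1: "F \<noteq> 0 \<Longrightarrow> (c::complex) \<noteq> 0 \<Longrightarrow>
   c * (w ^ Suc (Suc k) / (2 ^ Suc (Suc k) * (c * F))) = w^2/2 * (w ^ k / (2 ^ Suc k * F))"
  by (simp add: field_simps power2_eq_square)

lemma aux2: "F \<noteq> 0 \<Longrightarrow> (c::complex) \<noteq> 0 \<Longrightarrow>
   c * (x / (2 ^ Suc n * (c * F))) = 1/2 * (x / (2 ^ n * F))"
  by (simp add: field_simps)

lemma cosh_deriv: "fps_deriv (cosh_half w) = fps_const (w^2/2) * sinh_half_over w"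
proof (rule fps_ext)
  fix n
  show "fps_deriv (cosh_half w) $ n = (fps_const (w^2/2) * sinh_half_over w) $ n"
  proof (cases "odd n")
    case True
    then obtain k where n: "n = Suc k" by (cases n) auto
    have ev: "even (Suc (Suc k))" using True n by simp
    have f: "(fact (Suc (Suc k)) :: complex) = of_nat (Suc (Suc k)) * fact (Suc k)"
      by (simp only: fact_Suc)
    have "fps_deriv (cosh_half w) $ n = of_nat (Suc (Suc k)) * (w ^ Suc (Suc k) / (2 ^ Suc (Suc k) * (of_nat (Suc (Suc k)) * fact (Suc k))))"
      unfolding cosh_half_def n fps_deriv_nth fps_nth_Abs_fps using ev f by (simp del: of_nat_Suc fact_Suc)
    also have "\<dots> = w^2/2 * (w ^ k / (2 ^ Suc k * fact (Suc k)))"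
      by (rule aux1) (simp_all del: of_nat_Suc fact_Suc)
    also have "\<dots> = (fps_const (w^2/2) * sinh_half_over w) $ n"
      unfolding sinh_half_over_def n using True n by (simp add: fps_mult_left_const_nth del: of_nat_Suc fact_Suc)
    finally show ?thesis .
  next
    case False
    then show ?thesis
      unfolding cosh_half_def sinh_half_over_def by (simp add: fps_mult_left_const_nth)
  qed
qed

lemma sinh_deriv: "fps_deriv (sinh_half_over w) = fps_const (1/2) * cosh_half w"
proof (rule fps_ext)
  fix n
  show "fps_deriv (sinh_half_over w) $ n = (fps_const (1/2) * cosh_half w) $ n"
  proof (cases "even n")
    case True
    have od: "odd (Suc n)" using True by simp
    have f: "(fact (Suc n) :: complex) = of_nat (Suc n) * fact n"
      by (simp only: fact_Suc)
    have "fps_deriv (sinh_half_over w) $ n = of_nat (Suc n) * (w ^ n / (2 ^ Suc n * (of_nat (Suc n) * fact n)))"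
      unfolding sinh_half_over_def fps_deriv_nth fps_nth_Abs_fps using od f by (simp del: of_nat_Suc fact_Suc)
    also have "\<dots> = 1/2 * (w ^ n / (2 ^ n * fact n))"
      by (rule aux2) (simp_all del: of_nat_Suc fact_Suc)
    also have "\<dots> = (fps_const (1/2) * cosh_half w) $ n"
      unfolding cosh_half_def using True by (simp add: fps_mult_left_const_nth del: of_nat_Suc fact_Suc)
    finally show ?thesis .
  next
    case False
    then show ?thesis
      unfolding cosh_half_def sinh_half_over_def by (simp add: fps_mult_left_const_nth)
  qed
qed

lemma ring_id: fixes B D D1 K :: "'a::comm_ring_1"
  shows "(B*B + (K+K)*(B-1))*D + B*D1 + (K*K+K+K)*D + K*D1 = (B+K)*(B*D + D1 + K*D)"
  by (simp add: algebra_simps)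




theorem theorem4p3:
  fixes u \<beta> w :: complex
  assumes "w ^ 2 = (u + 1) ^ 2 - 4"
  shows "lhs_egf u \<beta> =
    fps_exp (\<beta> * (u - 1) / 2) *
    fps_powc (inverse (cosh_half w - fps_const (1 + u) * sinh_half_over w)) \<beta>"
proof -
  define C where "C = cosh_half w"
  define S where "S = sinh_half_over w"
  define D where "D = C - fps_const (1 + u) * S"
  define k where "k = (u - 1) / 2"
  define K where "K = fps_const k"
  define B where "B = Bser u"
  define A where "A = Aser u \<beta>"
  define D1 where "D1 = fps_deriv D"
  define G where "G = inverse D"
  have C0: "C $ 0 = 1" unfolding C_def cosh_half_def by simp
  have S0: "S $ 0 = 0" unfolding S_def sinh_half_over_def by simp
  have C1: "C $ 1 = 0" unfolding C_def cosh_half_def by simp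
  have S1: "S $ 1 = 1/2" unfolding S_def sinh_half_over_def by simp
  have D0: "D $ 0 = 1" unfolding D_def using C0 S0 by simp
  have D1e: "D1 = fps_const (w^2/2) * S - fps_const (1 + u) * (fps_const (1/2) * C)"
    unfolding D1_def D_def C_def S_def by (simp add: cosh_deriv sinh_deriv)
  have D2: "fps_deriv D1 = (K*K + K + K) * D"
  proof -
    have "fps_deriv D1 = fps_const (w^2/2) * (fps_const (1/2) * C) - fps_const (1 + u) * (fps_const (1/2) * (fps_const (w^2/2) * S))"
      unfolding D1e C_def S_def by (simp only: cosh_deriv sinh_deriv fps_deriv_sub fps_deriv_mult_const_left)
    also have "\<dots> = (fps_const (w^2/2) * fps_const (1/2)) * (C - fps_const (1 + u) * S)"
      by (simp only: algebra_simps)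
    also have "fps_const (w^2/2) * fps_const (1/2) = K*K + K + K"
    proof -
      have eq: "w^2/2 * (1/2) = k*k + k + k" unfolding k_def assms by (simp add: field_simps power2_eq_square algebra_simps)
      show ?thesis unfolding K_def by (simp only: fps_const_mult fps_const_add eq)
    qed
    finally show ?thesis unfolding D_def .
  qed
  have Bd: "fps_deriv B = B*B + (K+K)*(B-1)"
  proof -
    have uk: "u - 1 = k + k" unfolding k_def by (simp add: field_simps)
    have "fps_const (u - 1) = K + K" unfolding K_def fps_const_add uk ..
    then show ?thesis unfolding B_def using B_deriv by simp
  qed
  have B0: "B $ 0 = 1" unfolding B_def Bser_def by simp
  define Y where "Y = B*D + D1 + K*D"
  have Yd: "fps_deriv Y = (B + K) * Y"
  proof -
    have "fps_deriv Y = fps_deriv B * D + B * D1 + fps_deriv D1 + K * D1"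
      unfolding Y_def K_def D1_def by (simp add: algebra_simps)
    also have "\<dots> = (B*B + (K+K)*(B-1))*D + B*D1 + (K*K+K+K)*D + K*D1"
      unfolding Bd D2 by simp
    also have "\<dots> = (B + K) * Y" unfolding Y_def by (rule ring_id)
    finally show ?thesis .
  qed
  have Y0: "Y $ 0 = 0"
  proof -
    have "D1 $ 0 = D $ 1" unfolding D1_def by simp
    also have "\<dots> = C $ 1 - (1 + u) * S $ 1" unfolding D_def by simp
    also have "\<dots> = - (1 + u) / 2" unfolding C1 S1 by (simp add: field_simps)
    finally have "D1 $ 0 = - (1 + u) / 2" .
    then show ?thesis unfolding Y_def K_def k_def using B0 D0 by (simp add: field_simps)
  qed
  have Yz: "Y = 0" by (rule ode_zero[OF Yd Y0])
  have DG: "D * G = 1" unfolding G_def using D0 by (simp add: inverse_mult_eq_1')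
  have Beq: "B = - (D1 * G) - K"
  proof -
    have "B * D = - (D1 + K * D)" using Yz unfolding Y_def by (simp add: algebra_simps eq_neg_iff_add_eq_0)
    have "B = B * (D * G)" using DG by simp
    also have "\<dots> = (B * D) * G" by (simp only: mult.assoc)
    also have "\<dots> = - (D1 * G) - K * (D * G)" unfolding \<open>B * D = - (D1 + K * D)\<close> by (simp add: algebra_simps)
    also have "\<dots> = - (D1 * G) - K" using DG by simp
    finally show ?thesis .
  qed
  define M where "M = fps_const \<beta> * (B + fps_const (u - 1))"
  have Ad: "fps_deriv A = M * A" unfolding A_def M_def B_def by (rule A_deriv)
  have M_alt: "M = fps_const (\<beta> * (u - 1) / 2) - fps_const \<beta> * (D1 * G)"
  proof -
    have uk: "u - 1 = k + k" unfolding k_def by (simp add: field_simps)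
    have "fps_const (u - 1) = K + K" unfolding K_def fps_const_add uk ..
    then have "M = fps_const \<beta> * (K - D1 * G)" unfolding M_def Beq by (simp add: algebra_simps)
    also have "fps_const \<beta> * K = fps_const (\<beta> * (u - 1) / 2)" unfolding K_def k_def by simp
    ultimately show ?thesis by (simp add: algebra_simps)
  qed
  have G0: "G $ 0 = 1" unfolding G_def using D0 by simp
  define H where "H = fps_const \<beta> * (fps_ln 1 oo (G - 1))"
  define P where "P = fps_exp 1 oo H"
  have H0: "H $ 0 = 0" unfolding H_def by (simp add: fps_ln_def)
  have Gm0: "(G - 1) $ 0 = 0" using G0 by simp
  have invc: "inverse (1 + fps_X) oo (G - 1) = D"
  proof -
    have "inverse (1 + fps_X) oo (G - 1) = inverse ((1 + fps_X) oo (G - 1))"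
      by (rule fps_inverse_compose[OF Gm0]) simp
    also have "(1 + fps_X) oo (G - 1) = G"
      using Gm0 by (simp add: fps_compose_add_distrib)
    also have "inverse G = D" unfolding G_def using D0 by simp
    finally show ?thesis .
  qed
  have Gd: "fps_deriv G = - (D1 * G * G)"
    unfolding G_def D1_def using D0 by (simp add: fps_inverse_deriv power2_eq_square)
  have Ld: "fps_deriv (fps_ln 1 oo (G - 1)) = - (D1 * G)"
  proof -
    have "fps_deriv (fps_ln 1 oo (G - 1)) = (fps_deriv (fps_ln 1) oo (G - 1)) * fps_deriv (G - 1)"
      by (rule fps_compose_deriv[OF Gm0])
    also have "\<dots> = D * (- (D1 * G * G))"
      by (simp add: fps_ln_deriv invc Gd)
    also have "\<dots> = - (D1 * G * (D * G))" by (simp add: algebra_simps)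
    finally show ?thesis using DG by simp
  qed
  have Pd: "fps_deriv P = P * (- (fps_const \<beta> * (D1 * G)))"
  proof -
    have "fps_deriv P = (fps_deriv (fps_exp 1) oo H) * fps_deriv H"
      unfolding P_def by (rule fps_compose_deriv[OF H0])
    also have "\<dots> = P * fps_deriv H" unfolding P_def by simp
    also have "fps_deriv H = - (fps_const \<beta> * (D1 * G))" unfolding H_def using Ld by simp
    finally show ?thesis .
  qed
  define E where "E = fps_exp (\<beta> * (u - 1) / 2)"
  define R where "R = E * P"
  have Rd: "fps_deriv R = M * R"
  proof -
    have "fps_deriv R = fps_const (\<beta> * (u - 1) / 2) * E * P + E * (P * (- (fps_const \<beta> * (D1 * G))))"
      unfolding R_def E_def using Pd by (simp add: algebra_simps)
    also have "\<dots> = M * R" unfolding M_alt R_def by (simp add: algebra_simps)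
    finally show ?thesis .
  qed
  have R0: "R $ 0 = 1" unfolding R_def E_def P_def by simp
  have A0: "A $ 0 = 1" unfolding A_def Aser_def by simp
  have "fps_deriv (A - R) = M * (A - R)" using Ad Rd by (simp add: algebra_simps)
  moreover have "(A - R) $ 0 = 0" using A0 R0 by simp
  ultimately have "A - R = 0" by (rule ode_zero)
  then have AR: "A = R" by simp
  have "lhs_egf u \<beta> = A" unfolding A_def Aser_def by (rule fps_ext) (simp add: lhs_coeff)
  also have "\<dots> = R" by (rule AR)
  also have "R = fps_exp (\<beta> * (u - 1) / 2) *
    fps_powc (inverse (cosh_half w - fps_const (1 + u) * sinh_half_over w)) \<beta>"
    unfolding R_def E_def P_def H_def fps_powc_def G_def D_def C_def S_def ..
  finally show ?thesis .
qed


end
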